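(* Let RV (Range Voting) be the voting rule that, on any profile, elects an alternative maximizing the social welfare of the voters of that profile. In any district-based election with $m$ alternatives, $n$ voters and $k$ districts using RV in every district, for any election winner $a$, $$\frac{\max_{j}\mathrm{SW}(j\mid\mathbf v)}{\mathrm{SW}(a\mid\mathbf v)}\le \begin{cases} 1+\dfrac{mk}{2} & \text{(symmetric)},\\[2mm] 1+\dfrac{m}{2}\left(\dfrac{n+\max_{d}n_d}{\min_{d}n_d}-1\right) & \text{(unweighted)},\\[2mm] 1+m\left(\dfrac{n}{\min_{d}n_d}-1\right) & \text{(unrestricted)}. \end{cases}$$
   Context: A district-based election consists of a set $\mathcal M$ of $m\ge 2$ alternatives, a set $\mathcal N$ of $n$ voters, a partition $\mathcal D$ of $\mathcal N$ into $k$ nonempty districts (district $d$ has $n_d$ voters), positive weights $w_d>0$, and a valuation profile $\mathbf v$ with $v_{ij}\ge0$ and $\sum_j v_{ij}=1$ for every voter $i$. In each district $d$ the local winner $j_d$ is the output of the voting rule on the subprofile of voters in $d$ (local ties broken arbitrarily); the election winner is any alternative in $\arg\max_j\sum_d w_d\mathbf 1[j=j_d]$. $\mathrm{SW}(j\mid\mathbf v)=\sum_i v_{ij}$. Symmetric: $n_d=n/k$, $w_d=1$; unweighted: $w_d=1$; unrestricted: arbitrary sizes and positive weights. *)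

theory Defs
  imports Complex_Main "HOL-Library.Disjoint_Sets"
begin

definition SW :: "'v set \<Rightarrow> ('v \<Rightarrow> 'a \<Rightarrow> real) \<Rightarrow> 'a \<Rightarrow> real" where
  "SW V v j = (\<Sum>i\<in>V. v i j)"

definition RV_winner :: "'a set \<Rightarrow> 'v set \<Rightarrow> ('v \<Rightarrow> 'a \<Rightarrow> real) \<Rightarrow> 'a \<Rightarrow> bool" where
  "RV_winner M V v j \<longleftrightarrow> j \<in> M \<and> (\<forall>j'\<in>M. SW V v j' \<le> SW V v j)"

definition district_score :: "'v set set \<Rightarrow> ('v set \<Rightarrow> real) \<Rightarrow> ('v set \<Rightarrow> 'a) \<Rightarrow> 'a \<Rightarrow> real" where
  "district_score D w loc j = (\<Sum>d\<in>D. w d * (if j = loc d then 1 else 0))"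

definition election_winner :: "'a set \<Rightarrow> 'v set set \<Rightarrow> ('v set \<Rightarrow> real) \<Rightarrow> ('v set \<Rightarrow> 'a) \<Rightarrow> 'a \<Rightarrow> bool" where
  "election_winner M D w loc a \<longleftrightarrow>
     a \<in> M \<and> (\<forall>j\<in>M. district_score D w loc j \<le> district_score D w loc a)"

definition valid_profile :: "'a set \<Rightarrow> 'v set \<Rightarrow> ('v \<Rightarrow> 'a \<Rightarrow> real) \<Rightarrow> bool" where
  "valid_profile M N v \<longleftrightarrow> (\<forall>i\<in>N. (\<forall>j\<in>M. 0 \<le> v i j) \<and> (\<Sum>j\<in>M. v i j) = 1)"

end

theory Submission
  imports Defs
begin

lemma SW_nonneg:
  assumes "valid_profile M N v" "d \<subseteq> N" "j \<in> M"
  shows "0 \<le> SW d v j"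
  using assms unfolding SW_def valid_profile_def by (auto intro!: sum_nonneg)

lemma sum_M_SW:
  assumes "valid_profile M N v" "d \<subseteq> N" "finite d"
  shows "(\<Sum>j\<in>M. SW d v j) = real (card d)"
proof -
  have "(\<Sum>j\<in>M. SW d v j) = (\<Sum>i\<in>d. \<Sum>j\<in>M. v i j)"
    unfolding SW_def by (rule sum.swap)
  also have "\<dots> = (\<Sum>i\<in>d. 1)"
    using assms unfolding valid_profile_def by (intro sum.cong) auto
  finally show ?thesis by simp
qed

lemma two_le:
  assumes "valid_profile M N v" "d \<subseteq> N" "finite d" "finite M"
    "b \<in> M" "j \<in> M" "b \<noteq> j"
  shows "SW d v b + SW d v j \<le> real (card d)"
proof -
  have "SW d v b + SW d v j = (\<Sum>x\<in>{b,j}. SW d v x)" using assms by simp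
  also have "\<dots> \<le> (\<Sum>x\<in>M. SW d v x)"
    using assms by (intro sum_mono2) (auto intro: SW_nonneg)
  finally show ?thesis using sum_M_SW[OF assms(1-3)] by simp
qed

lemma SW_le_card:
  assumes "valid_profile M N v" "d \<subseteq> N" "finite d" "finite M" "b \<in> M"
  shows "SW d v b \<le> real (card d)"
proof -
  have "SW d v b = (\<Sum>x\<in>{b}. SW d v x)" by simp
  also have "\<dots> \<le> (\<Sum>x\<in>M. SW d v x)"
    using assms by (intro sum_mono2) (auto intro: SW_nonneg)
  finally show ?thesis using sum_M_SW[OF assms(1-3)] by simp
qed

lemma card_le_m_SW:
  assumes "valid_profile M N v" "d \<subseteq> N" "finite d" "finite M" "RV_winner M d v j"
  shows "real (card d) \<le> real (card M) * SW d v j"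
proof -
  have "(\<Sum>x\<in>M. SW d v x) \<le> (\<Sum>x\<in>M. SW d v j)"
    using assms(5) unfolding RV_winner_def by (intro sum_mono) auto
  then show ?thesis using sum_M_SW[OF assms(1-3)] by simp
qed



lemma arith_ratio:
  fixes S OPT nA m X :: real
  assumes "S > 0" "nA / m \<le> S" "nA > 0" "m > 0" "OPT \<le> S + X" "X \<ge> 0"
  shows "OPT / S \<le> 1 + m * X / nA"
proof -
  have "OPT / S \<le> (S + X) / S" using assms by (simp add: divide_right_mono)
  also have "\<dots> = 1 + X / S" using assms by (simp add: field_simps)
  also have "X / S \<le> X / (nA / m)"
    using assms by (intro divide_left_mono) auto
  also have "X / (nA / m) = m * X / nA" using assms by simp
  finally show ?thesis by simp
qed

theorem corollary1:
  fixes M :: "'a set" and N :: "'v set" and D :: "'v set set"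
    and w :: "'v set \<Rightarrow> real" and v :: "'v \<Rightarrow> 'a \<Rightarrow> real"
    and loc :: "'v set \<Rightarrow> 'a" and a :: 'a
  assumes finM: "finite M" and m2: "card M \<ge> 2"
    and finN: "finite N" and Nne: "N \<noteq> {}"
    and part: "partition_on N D"
    and wpos: "\<forall>d\<in>D. w d > 0"
    and prof: "valid_profile M N v"
    and local: "\<forall>d\<in>D. RV_winner M d v (loc d)"
    and win: "election_winner M D w loc a"
  shows
    "((\<forall>d\<in>D. w d = 1 \<and> real (card d) = real (card N) / real (card D)) \<longrightarrow>
        Max ((\<lambda>j. SW N v j) ` M) / SW N v a \<le> 1 + real (card M) * real (card D) / 2)
   \<and> ((\<forall>d\<in>D. w d = 1) \<longrightarrow>
        Max ((\<lambda>j. SW N v j) ` M) / SW N v a \<le>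
          1 + real (card M) / 2 *
            ((real (card N) + real (Max (card ` D))) / real (Min (card ` D)) - 1))
   \<and> (Max ((\<lambda>j. SW N v j) ` M) / SW N v a \<le>
          1 + real (card M) * (real (card N) / real (Min (card ` D)) - 1))"
proof -
  have finD: "finite D" using finite_elements[OF finN part] .
  have NU: "N = \<Union>D" using partition_onD1[OF part] by simp
  have disj: "disjoint D" using partition_onD2[OF part] .
  have dsub: "d \<subseteq> N" if "d \<in> D" for d using NU that by auto
  have dfin: "finite d" if "d \<in> D" for d using dsub[OF that] finN finite_subset by blast
  have dne: "d \<noteq> {}" if "d \<in> D" for d using partition_onD3[OF part] that by auto
  have Dne: "D \<noteq> {}" using NU Nne by auto
  have Mne: "M \<noteq> {}" using m2 by auto
  have aM: "a \<in> M" using win unfolding election_winner_def by auto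
  have locM: "loc d \<in> M" if "d \<in> D" for d using local that unfolding RV_winner_def by auto
  have SWsplit: "SW N v j = (\<Sum>d\<in>D. SW d v j)" for j
  proof -
    have "SW N v j = sum (\<lambda>i. v i j) (\<Union>D)" unfolding SW_def NU ..
    also have "\<dots> = (\<Sum>d\<in>D. sum (\<lambda>i. v i j) d)"
      using disj dfin by (subst sum.Union_disjoint) (auto simp: disjoint_def)
    finally show ?thesis unfolding SW_def .
  qed
  have ncard: "real (card N) = (\<Sum>d\<in>D. real (card d))"
  proof -
    have "card N = sum card D" unfolding NU using disj dfin by (intro card_Union_disjoint) auto
    then show ?thesis by simp
  qed
  define mm where "mm = real (card M)"
  have mmpos: "mm > 0" unfolding mm_def using m2 by simp
  define n where "n = real (card N)"
  define S where "S = SW N v a"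
  define OPT where "OPT = Max ((\<lambda>j. SW N v j) ` M)"
  obtain b where bM: "b \<in> M" and bOPT: "SW N v b = OPT"
  proof -
    have "OPT \<in> (\<lambda>j. SW N v j) ` M" unfolding OPT_def using finM Mne by (intro Max_in) auto
    then show ?thesis using that by auto
  qed
  have OPTge: "S \<le> OPT" unfolding S_def OPT_def using finM aM by (intro Max_ge) auto
  define mn where "mn = real (Min (card ` D))"
  define Mx where "Mx = real (Max (card ` D))"
  have mn_le: "mn \<le> real (card d)" if "d \<in> D" for d
    unfolding mn_def using finD that by (simp add: Min_le)
  have Mx_ge: "real (card d) \<le> Mx" if "d \<in> D" for d
    unfolding Mx_def using finD that by (simp add: Max_ge)
  have mnpos: "mn > 0"
  proof -
    obtain d where "d \<in> D" "Min (card ` D) = card d" 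
  proof -
    have "Min (card ` D) \<in> card ` D" using finD Dne by (intro Min_in) auto
    then show ?thesis using that by blast
  qed
    then show ?thesis unfolding mn_def using dne dfin by (simp add: card_gt_0_iff)
  qed
  define nA where "nA = (\<Sum>d\<in>D. if loc d = a then real (card d) else 0)"
  define SA where "SA = (\<Sum>d\<in>D. if loc d = a then SW d v a else 0)"
  have SA_le: "SA \<le> S" unfolding SA_def S_def SWsplit
    by (intro sum_mono) (auto intro: SW_nonneg[OF prof dsub aM])
  have nA_SA: "nA \<le> mm * SA" unfolding nA_def SA_def sum_distrib_left mm_def
    by (intro sum_mono) (auto intro: card_le_m_SW[OF prof dsub dfin finM] simp: local)
  have nA_le_n: "nA \<le> n" unfolding nA_def n_def ncard by (intro sum_mono) auto
  obtain d0 where d0: "d0 \<in> D" "loc d0 = a"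
  proof (rule ccontr)
    assume "\<not> thesis"
    with that have none: "\<forall>d\<in>D. loc d \<noteq> a" by blast
    obtain d1 where d1: "d1 \<in> D" using Dne by auto
    have "district_score D w loc a = 0" unfolding district_score_def using none by (intro sum.neutral) auto
    moreover have "district_score D w loc (loc d1) \<ge> w d1"
    proof -
      have "w d1 * (if loc d1 = loc d1 then 1 else 0) \<le> district_score D w loc (loc d1)"
        unfolding district_score_def using finD d1 wpos
        by (intro member_le_sum) auto
      then show ?thesis by simp
    qed
    moreover have "district_score D w loc (loc d1) \<le> district_score D w loc a"
      using win locM[OF d1] unfolding election_winner_def by auto
    ultimately show False using wpos d1 by force
  qed
  have nA_ge: "mn \<le> nA"
  proof -
    have "(if loc d0 = a then real (card d0) else 0) \<le> nA"
      unfolding nA_def using finD d0 by (intro member_le_sum) auto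
    then show ?thesis using mn_le[OF d0(1)] d0 by simp
  qed
  have nApos: "nA > 0" using nA_ge mnpos by simp
  have Spos: "S > 0"
  proof -
    have "nA / mm \<le> SA" using nA_SA mmpos by (simp add: field_simps)
    then show ?thesis using SA_le nApos mmpos by (smt (verit) divide_pos_pos)
  qed
  have S_ge: "nA / mm \<le> S"
  proof -
    have "SA * mm \<le> S * mm" using SA_le mmpos by (intro mult_right_mono) auto
    then have "nA \<le> S * mm" using nA_SA by (simp add: mult.commute)
    then show ?thesis using mmpos by (simp add: field_simps)
  qed
  have unres: "OPT / S \<le> 1 + mm * (n / mn - 1)"
  proof -
    have "OPT \<le> SA + (n - nA)"
    proof -
      have "OPT = (\<Sum>d\<in>D. SW d v b)" using bOPT SWsplit by simp
      also have "\<dots> \<le> (\<Sum>d\<in>D. (if loc d = a then SW d v a else 0)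
                     + (real (card d) - (if loc d = a then real (card d) else 0)))"
      proof (intro sum_mono)
        fix d assume d: "d \<in> D"
        show "SW d v b \<le> (if loc d = a then SW d v a else 0)
                     + (real (card d) - (if loc d = a then real (card d) else 0))"
          using local d bM SW_le_card[OF prof dsub[OF d] dfin[OF d] finM bM]
          unfolding RV_winner_def by auto
      qed
      also have "\<dots> = SA + (n - nA)"
        unfolding SA_def nA_def n_def ncard sum.distrib sum_subtractf by simp
      finally show ?thesis .
    qed
    then have "OPT \<le> S + (n - nA)" using SA_le by simp
    then have "OPT / S \<le> 1 + mm * (n - nA) / nA"
      using arith_ratio[OF Spos S_ge nApos mmpos] nA_le_n by simp
    also have "mm * (n - nA) / nA = mm * (n / nA - 1)" using nApos by (simp add: field_simps)
    also have "n / nA \<le> n / mn"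
      using nA_ge mnpos nA_le_n nApos by (intro divide_left_mono) auto
    finally show ?thesis using mmpos by simp
  qed
  have unw: "OPT / S \<le> 1 + mm / 2 * ((n + Mx) / mn - 1)" if w1: "\<forall>d\<in>D. w d = 1"
  proof (cases "b = a")
    case True
    then have "OPT / S = 1" using bOPT Spos S_def by simp
    moreover have "(n + Mx) / mn \<ge> 1"
      using mnpos mn_le[OF d0(1)] Mx_ge[OF d0(1)] by (simp add: n_def field_simps)
    ultimately show ?thesis using mmpos by simp
  next
    case False
    define cA where "cA = real (card {d\<in>D. loc d = a})"
    define cO where "cO = real (card {d\<in>D. loc d = b})"
    define nO where "nO = (\<Sum>d\<in>D. if loc d = b then real (card d) else 0)"
    have score: "district_score D w loc j = real (card {d\<in>D. loc d = j})" for j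
    proof -
      have "district_score D w loc j = (\<Sum>d\<in>D. if loc d = j then 1 else 0)"
        unfolding district_score_def using w1 by (intro sum.cong) auto
      also have "\<dots> = (\<Sum>d\<in>{d\<in>D. loc d = j}. 1)"
        using finD by (rule sum.inter_filter[symmetric])
      finally show ?thesis by simp
    qed
    have cO_cA: "cO \<le> cA" using win bM unfolding election_winner_def score cO_def cA_def by auto
    have nA_cA: "cA * mn \<le> nA"
    proof -
      have "cA * mn = (\<Sum>d\<in>D. if loc d = a then mn else 0)"
        unfolding cA_def using finD by (simp add: sum.inter_filter[symmetric])
      also have "\<dots> \<le> nA" unfolding nA_def using mn_le by (intro sum_mono) auto
      finally show ?thesis .
    qed
    have nO_cO: "nO \<le> cO * Mx"
    proof -
      have "nO \<le> (\<Sum>d\<in>D. if loc d = b then Mx else 0)"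
        unfolding nO_def using Mx_ge by (intro sum_mono) auto
      also have "\<dots> = cO * Mx"
        unfolding cO_def using finD by (simp add: sum.inter_filter[symmetric])
      finally show ?thesis .
    qed
    have nO_ge: "0 \<le> nO" unfolding nO_def by (intro sum_nonneg) auto
    have "OPT \<le> SA + nO / 2 + (n - nA) / 2"
    proof -
      have "OPT = (\<Sum>d\<in>D. SW d v b)" using bOPT SWsplit by simp
      also have "\<dots> \<le> (\<Sum>d\<in>D. (if loc d = a then SW d v a else 0)
                     + (if loc d = b then real (card d) else 0) / 2
                     + (real (card d) - (if loc d = a then real (card d) else 0)) / 2)"
      proof (intro sum_mono)
        fix d assume d: "d \<in> D"
        have le: "SW d v b \<le> SW d v (loc d)" using local d bM unfolding RV_winner_def by auto
        have c1: "SW d v b \<le> real (card d)" using SW_le_card[OF prof dsub[OF d] dfin[OF d] finM bM] .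
        have c2: "loc d \<noteq> b \<Longrightarrow> SW d v b + SW d v (loc d) \<le> real (card d)"
          using two_le[OF prof dsub[OF d] dfin[OF d] finM bM locM[OF d]] by auto
        show "SW d v b \<le> (if loc d = a then SW d v a else 0)
                     + (if loc d = b then real (card d) else 0) / 2
                     + (real (card d) - (if loc d = a then real (card d) else 0)) / 2"
          using le c1 c2 False SW_nonneg[OF prof dsub[OF d] locM[OF d]] by (cases "loc d = a"; cases "loc d = b") auto
      qed
      also have "\<dots> = SA + nO / 2 + (n - nA) / 2"
        unfolding SA_def nA_def nO_def n_def ncard sum.distrib
        by (simp add: sum_divide_distrib[symmetric] sum_subtractf)
      finally show ?thesis .
    qed
    then have "OPT \<le> S + (nO + n - nA) / 2" using SA_le by (simp add: field_simps)
    then have "OPT / S \<le> 1 + mm * ((nO + n - nA) / 2) / nA"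
      by (rule arith_ratio[OF Spos S_ge nApos mmpos]) (use nA_le_n nO_ge in simp)
    also have "mm * ((nO + n - nA) / 2) / nA = mm / 2 * ((nO + n) / nA - 1)"
      using nApos by (simp add: field_simps)
    also have "(nO + n) / nA \<le> (n + Mx) / mn"
    proof -
      have cAge: "cA \<ge> 0" unfolding cA_def by simp
      have Mxge: "Mx \<ge> 0" using Mx_ge[OF d0(1)] by linarith
      have "nO * mn \<le> cA * Mx * mn" using nO_cO cO_cA mnpos Mxge
        by (intro mult_right_mono) (auto intro: order_trans mult_right_mono)
      also have "\<dots> = Mx * (cA * mn)" by simp
      also have "\<dots> \<le> Mx * nA" using nA_cA Mxge by (intro mult_left_mono) auto
      finally have h1: "nO * mn \<le> Mx * nA" .
      have h2: "n * mn \<le> n * nA" using nA_ge by (intro mult_left_mono) (auto simp: n_def)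
      have "(nO + n) * mn \<le> (n + Mx) * nA" using h1 h2 by (simp add: algebra_simps)
      then show ?thesis using mnpos nApos by (simp add: divide_simps)
    qed
    finally show ?thesis using mmpos by (simp add: mult_left_mono)
  qed
  have sym: "OPT / S \<le> 1 + mm * real (card D) / 2"
    if h: "\<forall>d\<in>D. w d = 1 \<and> real (card d) = real (card N) / real (card D)"
  proof -
    have kpos: "real (card D) > 0" using finD Dne by (simp add: card_gt_0_iff)
    have npos: "n > 0" unfolding n_def using finN Nne by (simp add: card_gt_0_iff)
    obtain d1 where "d1 \<in> D" "Min (card ` D) = card d1" 
  proof -
    have "Min (card ` D) \<in> card ` D" using finD Dne by (intro Min_in) auto
    then show ?thesis using that by blast
  qed
    then have mneq: "mn = n / real (card D)" unfolding mn_def n_def using h by simp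
    obtain d2 where "d2 \<in> D" "Max (card ` D) = card d2" 
  proof -
    have "Max (card ` D) \<in> card ` D" using finD Dne by (intro Max_in) auto
    then show ?thesis using that by blast
  qed
    then have Mxeq: "Mx = n / real (card D)" unfolding Mx_def n_def using h by simp
    have "OPT / S \<le> 1 + mm / 2 * ((n + Mx) / mn - 1)" using unw h by auto
    also have "(n + Mx) / mn - 1 = real (card D)" unfolding mneq Mxeq
      using kpos npos by (simp add: field_simps)
    finally show ?thesis by simp
  qed
  show ?thesis using sym unw unres
    unfolding OPT_def S_def mm_def n_def mn_def Mx_def by auto
qed

end
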